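(* Let $L$ be an $n\times n$ nonsingular M-matrix with integer entries. A vector $f\in\mathbb{Z}^n$ with $f\ge 0$ is $z$-superstable with respect to $L$ if and only if $f$ is the minimizer of $\min_{g\sim f,\ g\ge 0}E(g)$ (minimum over $g\in\mathbb{Z}^n$).
   Context: A Z-matrix is a square real matrix whose off-diagonal entries are all $\le 0$. A nonsingular M-matrix is a Z-matrix $L$ that is invertible with $L^{-1}$ having all entries nonnegative. Vector inequalities are entrywise. For $f,g\in\mathbb{Z}^n$, $f\sim g$ means $g-f=Lz$ for some $z\in\mathbb{Z}^n$. For $q\in\mathbb{Z}^n$, $E(q)=\|L^{-1}q\|_2^2$ with $\|v\|_2^2=v\cdot v$. A vector $f\in\mathbb{Z}^n$ with $f\ge 0$ is $z$-superstable with respect to $L$ if for every $z\in\mathbb{Z}^n$ with $z\ge0$ and $z\ne0$ there exists $i$ with $f_i-(Lz)_i<0$. *)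

theory Defs
  imports "HOL-Analysis.Analysis"
begin

definition real_mat :: "int ^'n ^'n \<Rightarrow> real ^'n ^'n" where
  "real_mat L = (\<chi> i j. real_of_int (L $ i $ j))"

definition real_vec :: "int ^'n \<Rightarrow> real ^'n" where
  "real_vec v = (\<chi> i. real_of_int (v $ i))"

definition z_matrix :: "'a::{zero,order} ^'n ^'n \<Rightarrow> bool" where
  "z_matrix L \<longleftrightarrow> (\<forall>i j. i \<noteq> j \<longrightarrow> L $ i $ j \<le> 0)"

definition nonsing_M_matrix :: "int ^'n ^'n \<Rightarrow> bool" where
  "nonsing_M_matrix L \<longleftrightarrow> z_matrix L \<and> invertible (real_mat L) \<and>
     (\<forall>i j. matrix_inv (real_mat L) $ i $ j \<ge> 0)"

definition L_equiv :: "int ^'n ^'n \<Rightarrow> int ^'n \<Rightarrow> int ^'n \<Rightarrow> bool" where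
  "L_equiv L f g \<longleftrightarrow> (\<exists>z :: int ^'n. g - f = L *v z)"

definition energy :: "int ^'n ^'n \<Rightarrow> int ^'n \<Rightarrow> real" where
  "energy L q = (let v = matrix_inv (real_mat L) *v real_vec q in v \<bullet> v)"

definition nonneg_vec :: "int ^'n \<Rightarrow> bool" where
  "nonneg_vec v \<longleftrightarrow> (\<forall>i. v $ i \<ge> 0)"

definition z_superstable :: "int ^'n ^'n \<Rightarrow> int ^'n \<Rightarrow> bool" where
  "z_superstable L f \<longleftrightarrow> nonneg_vec f \<and>
     (\<forall>z :: int ^'n. nonneg_vec z \<and> z \<noteq> 0 \<longrightarrow> (\<exists>i. f $ i - (L *v z) $ i < 0))"

end

theory Submission
  imports Defs
begin

lemma minv_props:
  assumes "invertible (A::real^'n^'n)"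
  shows "matrix_inv A ** A = mat 1" "A ** matrix_inv A = mat 1"
proof -
  have "A ** matrix_inv A = mat 1 \<and> matrix_inv A ** A = mat 1"
    using assms unfolding invertible_def matrix_inv_def by (rule someI_ex)
  then show "matrix_inv A ** A = mat 1" "A ** matrix_inv A = mat 1" by auto
qed

lemma minv_cancel:
  assumes "invertible (A::real^'n^'n)"
  shows "matrix_inv A *v (A *v v) = v"
  by (simp add: matrix_vector_mul_assoc minv_props[OF assms])

lemma real_vec_mult: "real_vec (L *v z) = real_mat L *v real_vec z"
  by (simp add: real_vec_def real_mat_def matrix_vector_mult_def vec_eq_iff)

lemma real_vec_add: "real_vec (a + b) = real_vec a + real_vec b"
  by (simp add: real_vec_def vec_eq_iff)

lemma real_vec_diff: "real_vec (a - b) = real_vec a - real_vec b"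
  by (simp add: real_vec_def vec_eq_iff)

lemma real_vec_nth: "real_vec a $ i = real_of_int (a $ i)"
  by (simp add: real_vec_def)

lemma energy_shift:
  assumes "invertible (real_mat L)"
  shows "energy L (f + L *v z) =
    (matrix_inv (real_mat L) *v real_vec f + real_vec z) \<bullet> (matrix_inv (real_mat L) *v real_vec f + real_vec z)"
  unfolding energy_def Let_def real_vec_add real_vec_mult matrix_vector_right_distrib
    minv_cancel[OF assms] ..

lemma energy_alt:
  "energy L f = (matrix_inv (real_mat L) *v real_vec f) \<bullet> (matrix_inv (real_mat L) *v real_vec f)"
  unfolding energy_def Let_def ..

lemma minv_nonneg:
  assumes "\<forall>i j. (M::real^'n^'n) $ i $ j \<ge> 0" "nonneg_vec v"
  shows "(M *v real_vec v) $ i \<ge> 0"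
  using assms unfolding matrix_vector_mult_def nonneg_vec_def
  by (auto intro!: sum_nonneg simp: real_vec_nth)

lemma zmat_nonpos:
  assumes "z_matrix L" "nonneg_vec v" "v $ i = 0"
  shows "((L::int^'n^'n) *v v) $ i \<le> 0"
proof -
  have "(L *v v) $ i = (\<Sum>j\<in>UNIV. L$i$j * v$j)" by (simp add: matrix_vector_mult_def)
  also have "\<dots> \<le> 0"
  proof (rule sum_nonpos)
    fix j :: 'n
    show "L$i$j * v$j \<le> 0"
    proof (cases "j = i")
      case True then show ?thesis using assms(3) by simp
    next
      case False
      then have "L$i$j \<le> 0" using assms(1) unfolding z_matrix_def by auto
      moreover have "v$j \<ge> 0" using assms(2) unfolding nonneg_vec_def by auto
      ultimately show ?thesis by (simp add: mult_nonpos_nonneg)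
    qed
  qed
  finally show ?thesis .
qed

lemma inner_sum: "(x::real^'n) \<bullet> y = (\<Sum>i\<in>UNIV. x$i * y$i)"
  by (simp add: inner_vec_def)

theorem mainTheorem5:
  fixes L :: "int ^'n ^'n" and f :: "int ^'n"
  assumes "nonsing_M_matrix L"
    and "nonneg_vec f"
  shows "z_superstable L f \<longleftrightarrow>
    (\<forall>g :: int ^'n. L_equiv L f g \<and> nonneg_vec g \<and> g \<noteq> f \<longrightarrow> energy L f < energy L g)"
proof -
  define M where "M = real_mat L"
  define Mi where "Mi = matrix_inv M"
  define x where "x = Mi *v real_vec f"
  have zm: "z_matrix L" and inv: "invertible M" and Mipos: "\<forall>i j. Mi $ i $ j \<ge> 0"
    using assms(1) unfolding nonsing_M_matrix_def M_def Mi_def by auto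
  have xpos: "x $ i \<ge> 0" for i unfolding x_def using minv_nonneg[OF Mipos assms(2)] .
  have Ef: "energy L f = x \<bullet> x" unfolding energy_alt x_def Mi_def M_def ..
  have Eg: "energy L (f + L *v z) = (x + real_vec z) \<bullet> (x + real_vec z)" for z
    unfolding x_def Mi_def M_def using energy_shift inv M_def by blast
  have inj: "L *v z = 0 \<Longrightarrow> z = 0" for z
  proof -
    assume "L *v z = 0"
    then have "M *v real_vec z = 0" unfolding M_def real_vec_mult[symmetric]
      by (simp add: real_vec_def vec_eq_iff)
    then have "real_vec z = 0" using minv_cancel[OF inv, of "real_vec z"] by simp
    then show "z = 0" by (simp add: real_vec_def vec_eq_iff)
  qed
  show ?thesis
  proof
    assume ss: "z_superstable L f"
    show "\<forall>g. L_equiv L f g \<and> nonneg_vec g \<and> g \<noteq> f \<longrightarrow> energy L f < energy L g"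
    proof (intro allI impI, elim conjE)
      fix g assume eq: "L_equiv L f g" and gn: "nonneg_vec g" and gf: "g \<noteq> f"
      obtain z where zd: "g - f = L *v z" using eq unfolding L_equiv_def by auto
      have gz: "g = f + L *v z" using zd by (simp add: algebra_simps)
      define w where "w = (\<chi> i. max 0 (- (z$i)))"
      define p where "p = (\<chi> i. max 0 (z$i))"
      have zpw: "z = p - w" unfolding p_def w_def by (simp add: vec_eq_iff max_def)
      have wn: "nonneg_vec w" "nonneg_vec p" unfolding w_def p_def nonneg_vec_def by auto
      have fw: "f $ i - (L *v w) $ i \<ge> 0" for i
      proof (cases "w $ i = 0")
        case True
        then show ?thesis using zmat_nonpos[OF zm wn(1) True] assms(2)
          unfolding nonneg_vec_def by (smt (verit))
      next
        case False
        then have "p $ i = 0" unfolding w_def p_def by auto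
        then have "(L *v p) $ i \<le> 0" using zmat_nonpos[OF zm wn(2)] by blast
        moreover have "g $ i \<ge> 0" using gn unfolding nonneg_vec_def by auto
        moreover have "g $ i = f $ i + (L *v p) $ i - (L *v w) $ i"
          unfolding gz zpw by (simp add: matrix_vector_mult_diff_distrib)
        ultimately show ?thesis by linarith
      qed
      have "w = 0"
      proof (rule ccontr)
        assume "w \<noteq> 0"
        then obtain i where "f $ i - (L *v w) $ i < 0" using ss wn(1) unfolding z_superstable_def by blast
        with fw[of i] show False by linarith
      qed
      then have zn: "z $ i \<ge> 0" for i
      proof -
        have "max 0 (- (z$i)) = 0" using \<open>w = 0\<close> unfolding w_def by (simp add: vec_eq_iff)
        then show ?thesis by linarith
      qed
      have "z \<noteq> 0" using gf gz by auto
      then obtain k where k: "z $ k \<noteq> 0" by (auto simp: vec_eq_iff)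
      have "(\<Sum>i\<in>UNIV. x$i * x$i) < (\<Sum>i\<in>UNIV. (x + real_vec z)$i * (x + real_vec z)$i)"
      proof (rule sum_strict_mono_ex1)
        show "\<forall>i\<in>UNIV. x$i * x$i \<le> (x + real_vec z)$i * (x + real_vec z)$i"
          using xpos zn by (auto simp: real_vec_nth intro!: mult_mono)
        have "z $ k > 0" using zn[of k] k by auto
        then have "x$k < (x + real_vec z)$k" by (simp add: real_vec_nth)
        then have "x$k * x$k < (x + real_vec z)$k * (x + real_vec z)$k"
          using xpos[of k] by (intro mult_strict_mono) auto
        then show "\<exists>i\<in>UNIV. x$i * x$i < (x + real_vec z)$i * (x + real_vec z)$i" by blast
      qed auto
      then show "energy L f < energy L g" unfolding gz Eg Ef inner_sum .
    qed
  next
    assume mn: "\<forall>g. L_equiv L f g \<and> nonneg_vec g \<and> g \<noteq> f \<longrightarrow> energy L f < energy L g"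
    show "z_superstable L f"
    proof (rule ccontr)
      assume "\<not> z_superstable L f"
      then obtain z where zn: "nonneg_vec z" "z \<noteq> 0" and fz: "\<forall>i. f $ i - (L *v z) $ i \<ge> 0"
        using assms(2) unfolding z_superstable_def by (auto simp: not_less)
      define g where "g = f + L *v (- z)"
      have gm: "g = f - L *v z" unfolding g_def
        using matrix_vector_mult_diff_distrib[of L 0 z] by simp
      have eq: "L_equiv L f g" unfolding L_equiv_def g_def by auto
      have gn: "nonneg_vec g" unfolding nonneg_vec_def gm using fz by simp
      have gf: "g \<noteq> f"
      proof
        assume "g = f"
        then have "L *v z = 0" using gm by (simp add: vec_eq_iff)
        then show False using inj zn(2) by blast
      qed
      have Mg: "Mi *v real_vec g = x - real_vec z"
        unfolding gm real_vec_diff real_vec_mult matrix_vector_mult_diff_distrib x_def Mi_def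
        using minv_cancel[OF inv] M_def by simp
      have xz: "(x - real_vec z) $ i \<ge> 0" for i
        using minv_nonneg[OF Mipos gn, of i] Mg by simp
      have Eg2: "energy L g = (x - real_vec z) \<bullet> (x - real_vec z)"
        unfolding energy_alt Mi_def[symmetric] M_def[symmetric] Mg ..
      have "(\<Sum>i\<in>UNIV. (x - real_vec z)$i * (x - real_vec z)$i) \<le> (\<Sum>i\<in>UNIV. x$i * x$i)"
      proof (rule sum_mono)
        fix i
        have "real_vec z $ i \<ge> 0" using zn(1) unfolding nonneg_vec_def by (simp add: real_vec_nth)
        then show "(x - real_vec z)$i * (x - real_vec z)$i \<le> x$i * x$i"
          using xz[of i] by (auto intro!: mult_mono)
      qed
      then have "energy L g \<le> energy L f" unfolding Eg2 Ef inner_sum .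
      moreover have "energy L f < energy L g" using mn eq gn gf by blast
      ultimately show False by linarith
    qed
  qed
qed

end
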